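(* Let $f:M\to\mathbb{R}^3$ be an immersion with eq\"uiaffine transversal vector field $\xi$ and positive definite induced bilinear form $h$, let $(u,v)$ be isothermal coordinates centered at an umbilical point $(0,0)$ with $\lambda_0=b_{11}(0,0)=b_{22}(0,0)\neq0$, and set $q_0=f(0,0)+\lambda_0^{-1}\xi(0,0)$. Let $\nu$ be the co-normal, $p=\nu\cdot(f-q_0)$ the support function, $\mathcal{P}=(p_{uu}-p_{vv},\,2p_{uv})$ and $\mathcal{B}=(b_{11}-b_{22},\,2b_{12})$. Then $$J_1\mathcal{P}(0,0)=\lambda_0^{-1}\delta_0\,J_1\mathcal{B}(0,0),$$ where $J_1$ denotes the $1$-jet at $(0,0)$ and $\delta_0=\delta(0,0)$ with $\delta=[f_u,f_v,\xi][\nu,\nu_u,\nu_v]/\rho$.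
   Context: $D$ is the flat connection of $\mathbb{R}^3$; $h$ and the shape operator $B$ are defined by $D_Xf_*Y=f_*(\nabla_XY)+h(X,Y)\xi$, $D_X\xi=-f_*(BX)+\tau(X)\xi$, eq\"uiaffine meaning $\tau=0$. Isothermal coordinates: $h(\partial_u,\partial_u)=h(\partial_v,\partial_v)=\rho$, $h(\partial_u,\partial_v)=0$. The matrix of $B$ is given by $\xi_u=-b_{11}f_u-b_{21}f_v$, $\xi_v=-b_{12}f_u-b_{22}f_v$ (with $b_{12}=b_{21}$). Umbilical: $B$ a multiple of the identity. The co-normal $\nu$ is defined by $\nu\cdot f_u=\nu\cdot f_v=0$, $\nu\cdot\xi=1$. $[a,b,c]$ is the determinant of three vectors. *)

theory Defs
  imports "HOL-Analysis.Analysis"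
begin

text \<open>Points of the coordinate domain are pairs (u,v). Partial derivatives:
  pd True = d/du, pd False = d/dv.\<close>

definition pd_u :: "(real \<times> real \<Rightarrow> 'a::real_normed_vector) \<Rightarrow> real \<times> real \<Rightarrow> 'a" where
  "pd_u g x = vector_derivative (\<lambda>t. g (t, snd x)) (at (fst x))"

definition pd_v :: "(real \<times> real \<Rightarrow> 'a::real_normed_vector) \<Rightarrow> real \<times> real \<Rightarrow> 'a" where
  "pd_v g x = vector_derivative (\<lambda>t. g (fst x, t)) (at (snd x))"

definition pd :: "bool \<Rightarrow> (real \<times> real \<Rightarrow> 'a::real_normed_vector) \<Rightarrow> real \<times> real \<Rightarrow> 'a" where
  "pd b g = (if b then pd_u g else pd_v g)"

fun pds :: "bool list \<Rightarrow> (real \<times> real \<Rightarrow> 'a::real_normed_vector) \<Rightarrow> real \<times> real \<Rightarrow> 'a" where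
  "pds [] g = g"
| "pds (b # bs) g = pd b (pds bs g)"

definition smooth2 :: "(real \<times> real) set \<Rightarrow> (real \<times> real \<Rightarrow> 'a::real_normed_vector) \<Rightarrow> bool" where
  "smooth2 U g \<longleftrightarrow> (\<forall>bs. pds bs g differentiable_on U)"

definition det3 :: "real^3 \<Rightarrow> real^3 \<Rightarrow> real^3 \<Rightarrow> real" where
  "det3 a b c = det (vector [a, b, c] :: real^3^3)"

definition jet1 :: "(real \<times> real \<Rightarrow> 'a::real_normed_vector) \<Rightarrow> real \<times> real \<Rightarrow> 'a \<times> 'a \<times> 'a" where
  "jet1 g x = (g x, pd_u g x, pd_v g x)"

end

theory Submission
  imports Defs
begin


definition ins :: "bool \<Rightarrow> real \<times> real \<Rightarrow> real \<Rightarrow> real \<times> real" where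
  "ins b x t = (if b then (t, snd x) else (fst x, t))"
definition sel :: "bool \<Rightarrow> real \<times> real \<Rightarrow> real" where
  "sel b x = (if b then fst x else snd x)"

lemma pd_alt: "pd b g x = vector_derivative (\<lambda>t. g (ins b x t)) (at (sel b x))"
  by (cases b) (simp_all add: pd_def pd_u_def pd_v_def ins_def sel_def)

lemma ins_sel[simp]: "ins b x (sel b x) = x"
  by (cases b) (simp_all add: ins_def sel_def)

lemma ins_has_derivative: "(ins b x has_derivative (\<lambda>s. ins b 0 s)) (at t)"
  by (cases b) (auto simp: ins_def[abs_def] intro!: derivative_eq_intros)

lemma ins_differentiable: "ins b x differentiable (at t)"
  using ins_has_derivative differentiable_def by blast

lemma continuous_ins: "continuous_on UNIV (ins b x)"
  by (cases b) (auto simp: ins_def intro!: continuous_intros)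

lemma pd_has:
  assumes "g differentiable (at x)"
  shows "((\<lambda>t. g (ins b x t)) has_vector_derivative pd b g x) (at (sel b x))"
proof -
  have "(g \<circ> ins b x) differentiable (at (sel b x))"
    by (rule differentiable_chain_at) (use assms ins_differentiable in auto)
  then show ?thesis unfolding pd_alt
    using vector_derivative_works by (auto simp: o_def)
qed

lemma pd_eqI:
  assumes "((\<lambda>t. g (ins b x t)) has_vector_derivative G) (at (sel b x))"
  shows "pd b g x = G"
  using assms by (simp add: pd_alt vector_derivative_at)

lemma pd_cong:
  assumes "open U" "x \<in> U" "\<forall>y\<in>U. g y = h y"
  shows "pd b g x = pd b h x"
proof -
  have o: "open (ins b x -` U)"
    using continuous_ins assms(1) open_vimage by blast
  have "sel b x \<in> ins b x -` U" using assms(2) by simp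
  then have "eventually (\<lambda>t. t \<in> ins b x -` U) (nhds (sel b x))"
    using o eventually_nhds by blast
  then have "eventually (\<lambda>t. t \<in> UNIV \<longrightarrow> g (ins b x t) = h (ins b x t)) (nhds (sel b x))"
    by eventually_elim (use assms(3) in auto)
  then show ?thesis unfolding pd_alt
    by (intro vector_derivative_cong_eq) auto
qed

lemma pds_append: "pds (bs @ [b]) g = pds bs (pd b g)"
  by (induction bs) auto

lemma pds_cong:
  assumes "open U" "\<forall>y\<in>U. g y = h y"
  shows "\<forall>x\<in>U. pds bs g x = pds bs h x"
proof (induction bs)
  case Nil then show ?case using assms by simp
next
  case (Cons b bs) then show ?case using assms by (auto intro: pd_cong)
qed

lemma differentiable_on_cong_open:
  assumes "open U" "\<forall>y\<in>U. g y = h y" "g differentiable_on U"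
  shows "h differentiable_on U"
proof -
  { fix x assume x: "x \<in> U"
    then have "g differentiable (at x)" using assms differentiable_on_eq_differentiable_at by blast
    then obtain g' where "(g has_derivative g') (at x)" by (auto simp: differentiable_def)
    then have "(h has_derivative g') (at x)"
      by (rule has_derivative_transform_within_open[OF _ assms(1) x]) (use assms(2) in auto)
    then have "h differentiable (at x)" by (auto simp: differentiable_def) }
  then show ?thesis using assms(1) differentiable_on_eq_differentiable_at by blast
qed

lemma smooth2_cong:
  assumes "open U" "\<forall>y\<in>U. g y = h y" "smooth2 U g"
  shows "smooth2 U h"
  using assms pds_cong[OF assms(1,2)] differentiable_on_cong_open
  unfolding smooth2_def by metis

definition smn :: "nat \<Rightarrow> (real \<times> real) set \<Rightarrow> (real \<times> real \<Rightarrow> 'a::real_normed_vector) \<Rightarrow> bool" where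
  "smn n U g \<longleftrightarrow> (\<forall>bs. length bs \<le> n \<longrightarrow> pds bs g differentiable_on U)"

lemma smooth2_smn: "smooth2 U g \<longleftrightarrow> (\<forall>n. smn n U g)"
  unfolding smooth2_def smn_def by auto

lemma smn_0: "smn 0 U g \<longleftrightarrow> g differentiable_on U"
  unfolding smn_def by auto

lemma smn_Suc: "smn (Suc n) U g \<longleftrightarrow> g differentiable_on U \<and> (\<forall>b. smn n U (pd b g))"
proof
  assume a: "smn (Suc n) U g"
  have "g differentiable_on U" using a[unfolded smn_def, rule_format, of "[]"] by simp
  moreover have "smn n U (pd b g)" for b
    unfolding smn_def
  proof (intro allI impI)
    fix bs :: "bool list" assume "length bs \<le> n"
    then show "pds bs (pd b g) differentiable_on U"
      using a[unfolded smn_def, rule_format, of "bs @ [b]"] by (simp add: pds_append)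
  qed
  ultimately show "g differentiable_on U \<and> (\<forall>b. smn n U (pd b g))" by blast
next
  assume a: "g differentiable_on U \<and> (\<forall>b. smn n U (pd b g))"
  show "smn (Suc n) U g" unfolding smn_def
  proof (intro allI impI)
    fix bs :: "bool list" assume l: "length bs \<le> Suc n"
    show "pds bs g differentiable_on U"
    proof (cases bs rule: rev_cases)
      case Nil then show ?thesis using a by simp
    next
      case (snoc bs' b)
      then show ?thesis using a l by (auto simp: pds_append smn_def)
    qed
  qed
qed

lemma smn_mono: "smn (Suc n) U g \<Longrightarrow> smn n U g"
  unfolding smn_def by auto

lemma smn_cong:
  assumes "open U" "\<forall>y\<in>U. g y = h y" "smn n U g"
  shows "smn n U h"
  using assms pds_cong[OF assms(1,2)] differentiable_on_cong_open
  unfolding smn_def by metis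

lemma smooth2_diff_at: "smooth2 U g \<Longrightarrow> open U \<Longrightarrow> x \<in> U \<Longrightarrow> g differentiable (at x)"
  unfolding smooth2_def using differentiable_on_eq_differentiable_at
  by (metis pds.simps(1))

lemma smooth2_pd: "smooth2 U g \<Longrightarrow> smooth2 U (pd b g)"
  unfolding smooth2_smn using smn_Suc by blast

lemma smooth2_const: "smooth2 U (\<lambda>x. c)"
proof -
  have "pds bs (\<lambda>x. c) = (if bs = [] then (\<lambda>x. c) else (\<lambda>x. 0))" for bs
  proof (induction bs)
    case Nil then show ?case by simp
  next
    case (Cons b bs)
    have "pd b (\<lambda>x. k) = (\<lambda>x. 0)" for k :: 'a
      by (auto simp: pd_alt)
    then show ?case using Cons by auto
  qed
  then show ?thesis unfolding smooth2_def by auto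
qed

lemma pd_const[simp]: "pd b (\<lambda>x. c) x = 0"
  by (simp add: pd_alt)

lemma pd_add:
  assumes "g differentiable (at x)" "h differentiable (at x)"
  shows "pd b (\<lambda>x. g x + h x) x = pd b g x + pd b h x"
  by (rule pd_eqI) (intro has_vector_derivative_add pd_has assms)

lemma pd_linear:
  assumes "bounded_linear L" "g differentiable (at x)"
  shows "pd b (\<lambda>x. L (g x)) x = L (pd b g x)"
  by (rule pd_eqI) (intro bounded_linear.has_vector_derivative[OF assms(1)] pd_has assms)

lemma pd_bilinear:
  assumes "bounded_bilinear P" "g differentiable (at x)" "h differentiable (at x)"
  shows "pd b (\<lambda>x. P (g x) (h x)) x = P (pd b g x) (h x) + P (g x) (pd b h x)"
proof (rule pd_eqI)
  show "((\<lambda>t. P (g (ins b x t)) (h (ins b x t))) has_vector_derivative P (pd b g x) (h x) + P (g x) (pd b h x)) (at (sel b x))"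
    using bounded_bilinear.has_vector_derivative[OF assms(1) pd_has[OF assms(2)] pd_has[OF assms(3)]]
    by (simp add: add.commute)
qed

lemma pd_inverse:
  fixes D :: "real \<times> real \<Rightarrow> real"
  assumes "D differentiable (at x)" "D x \<noteq> 0"
  shows "pd b (\<lambda>x. inverse (D x)) x = - (pd b D x * (inverse (D x) * inverse (D x)))"
proof (rule pd_eqI)
  have "((\<lambda>t. D (ins b x t)) has_real_derivative pd b D x) (at (sel b x))"
    using pd_has[OF assms(1)] has_real_derivative_iff_has_vector_derivative by blast
  from DERIV_inverse_fun[OF this] assms(2)
  have "((\<lambda>t. inverse (D (ins b x t))) has_real_derivative - (pd b D x * inverse (D x ^ Suc (Suc 0)))) (at (sel b x))"
    by simp
  then show "((\<lambda>t. inverse (D (ins b x t))) has_vector_derivative - (pd b D x * (inverse (D x) * inverse (D x)))) (at (sel b x))"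
    using has_real_derivative_iff_has_vector_derivative by (simp add: power2_eq_square)
qed

lemma diff_add: "g differentiable (at x) \<Longrightarrow> h differentiable (at x) \<Longrightarrow> (\<lambda>x. g x + h x) differentiable (at x)"
  by (rule differentiable_add)

lemma diff_linear: "bounded_linear L \<Longrightarrow> g differentiable (at x) \<Longrightarrow> (\<lambda>x. L (g x)) differentiable (at x)"
  using differentiable_chain_at[of g x L] bounded_linear_imp_differentiable[of L] by (auto simp: o_def)

lemma diff_bilinear:
  assumes "bounded_bilinear P" "g differentiable (at x)" "h differentiable (at x)"
  shows "(\<lambda>x. P (g x) (h x)) differentiable (at x)"
proof -
  obtain g' h' where "(g has_derivative g') (at x)" "(h has_derivative h') (at x)"
    using assms by (auto simp: differentiable_def)
  from bounded_bilinear.FDERIV[OF assms(1) this] show ?thesis by (auto simp: differentiable_def)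
qed

lemma diff_inverse:
  fixes D :: "real \<times> real \<Rightarrow> real"
  assumes "D differentiable (at x)" "D x \<noteq> 0"
  shows "(\<lambda>x. inverse (D x)) differentiable (at x)"
  using assms by (auto intro!: derivative_intros)

lemma don: "open U \<Longrightarrow> g differentiable_on U \<longleftrightarrow> (\<forall>x\<in>U. g differentiable (at x))"
  by (simp add: differentiable_on_eq_differentiable_at)

lemma smn_add:
  assumes "open U" shows "smn n U g \<Longrightarrow> smn n U h \<Longrightarrow> smn n U (\<lambda>x. g x + h x)"
proof (induction n arbitrary: g h)
  case 0 then show ?case by (auto simp: smn_0 don[OF assms] intro: diff_add)
next
  case (Suc n)
  have d: "g differentiable_on U" "h differentiable_on U" using Suc.prems smn_Suc by auto
  show ?case unfolding smn_Suc
  proof (intro conjI allI)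
    show "(\<lambda>x. g x + h x) differentiable_on U" using d by (auto simp: don[OF assms] intro: diff_add)
    fix b
    have "smn n U (\<lambda>x. pd b g x + pd b h x)" using Suc smn_Suc by blast
    moreover have "\<forall>x\<in>U. pd b g x + pd b h x = pd b (\<lambda>x. g x + h x) x"
      using d by (auto simp: don[OF assms] pd_add)
    ultimately show "smn n U (pd b (\<lambda>x. g x + h x))" by (rule smn_cong[OF assms, rotated])
  qed
qed

lemma smn_linear:
  assumes "open U" "bounded_linear L" shows "smn n U g \<Longrightarrow> smn n U (\<lambda>x. L (g x))"
proof (induction n arbitrary: g)
  case 0 then show ?case using assms by (auto simp: smn_0 don[OF assms(1)] intro: diff_linear)
next
  case (Suc n)
  have d: "g differentiable_on U" using Suc.prems smn_Suc by auto
  show ?case unfolding smn_Suc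
  proof (intro conjI allI)
    show "(\<lambda>x. L (g x)) differentiable_on U" using d assms by (auto simp: don[OF assms(1)] intro: diff_linear)
    fix b
    have "smn n U (\<lambda>x. L (pd b g x))" using Suc smn_Suc by blast
    moreover have "\<forall>x\<in>U. L (pd b g x) = pd b (\<lambda>x. L (g x)) x"
      using d assms by (auto simp: don[OF assms(1)] pd_linear)
    ultimately show "smn n U (pd b (\<lambda>x. L (g x)))" by (rule smn_cong[OF assms(1), rotated])
  qed
qed

lemma smn_bilinear:
  assumes "open U" "bounded_bilinear P" shows "smn n U g \<Longrightarrow> smn n U h \<Longrightarrow> smn n U (\<lambda>x. P (g x) (h x))"
proof (induction n arbitrary: g h)
  case 0 then show ?case using assms by (auto simp: smn_0 don[OF assms(1)] intro: diff_bilinear)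
next
  case (Suc n)
  have d: "g differentiable_on U" "h differentiable_on U" using Suc.prems smn_Suc by auto
  show ?case unfolding smn_Suc
  proof (intro conjI allI)
    show "(\<lambda>x. P (g x) (h x)) differentiable_on U" using d assms by (auto simp: don[OF assms(1)] intro: diff_bilinear)
    fix b
    have "smn n U (\<lambda>x. P (pd b g x) (h x))" using Suc.IH Suc.prems smn_Suc smn_mono by blast
    moreover have "smn n U (\<lambda>x. P (g x) (pd b h x))" using Suc.IH Suc.prems smn_Suc smn_mono by blast
    ultimately have "smn n U (\<lambda>x. P (pd b g x) (h x) + P (g x) (pd b h x))" by (rule smn_add[OF assms(1)])
    moreover have "\<forall>x\<in>U. P (pd b g x) (h x) + P (g x) (pd b h x) = pd b (\<lambda>x. P (g x) (h x)) x"
      using d assms by (auto simp: don[OF assms(1)] pd_bilinear)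
    ultimately show "smn n U (pd b (\<lambda>x. P (g x) (h x)))" by (rule smn_cong[OF assms(1), rotated])
  qed
qed

lemma smn_inverse:
  fixes D :: "real \<times> real \<Rightarrow> real"
  assumes "open U" "\<forall>x\<in>U. D x \<noteq> 0" shows "smn n U D \<Longrightarrow> smn n U (\<lambda>x. inverse (D x))"
proof (induction n)
  case 0 then show ?case using assms by (auto simp: smn_0 don[OF assms(1)] intro: diff_inverse)
next
  case (Suc n)
  have d: "D differentiable_on U" using Suc.prems smn_Suc by auto
  have i: "smn n U (\<lambda>x. inverse (D x))" using Suc smn_mono by blast
  show ?case unfolding smn_Suc
  proof (intro conjI allI)
    show "(\<lambda>x. inverse (D x)) differentiable_on U" using d assms by (auto simp: don[OF assms(1)] intro: diff_inverse)
    fix b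
    have "smn n U (\<lambda>x. inverse (D x) * inverse (D x))"
      by (rule smn_bilinear[OF assms(1) bounded_bilinear_mult i i])
    then have "smn n U (\<lambda>x. pd b D x * (inverse (D x) * inverse (D x)))"
      using Suc.prems smn_Suc smn_bilinear[OF assms(1) bounded_bilinear_mult] by blast
    then have "smn n U (\<lambda>x. - (pd b D x * (inverse (D x) * inverse (D x))))"
      by (rule smn_linear[OF assms(1) bounded_linear_minus[OF bounded_linear_ident]])
    moreover have "\<forall>x\<in>U. - (pd b D x * (inverse (D x) * inverse (D x))) = pd b (\<lambda>x. inverse (D x)) x"
      using d assms by (auto simp: don[OF assms(1)] pd_inverse)
    ultimately show "smn n U (pd b (\<lambda>x. inverse (D x)))" by (rule smn_cong[OF assms(1), rotated])
  qed
qed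

lemma smooth2_add: "open U \<Longrightarrow> smooth2 U g \<Longrightarrow> smooth2 U h \<Longrightarrow> smooth2 U (\<lambda>x. g x + h x)"
  by (simp add: smooth2_smn smn_add)
lemma smooth2_linear: "open U \<Longrightarrow> bounded_linear L \<Longrightarrow> smooth2 U g \<Longrightarrow> smooth2 U (\<lambda>x. L (g x))"
  by (simp add: smooth2_smn smn_linear)
lemma smooth2_bilinear: "open U \<Longrightarrow> bounded_bilinear P \<Longrightarrow> smooth2 U g \<Longrightarrow> smooth2 U h \<Longrightarrow> smooth2 U (\<lambda>x. P (g x) (h x))"
  by (simp add: smooth2_smn smn_bilinear)
lemma smooth2_inverse: "open U \<Longrightarrow> \<forall>x\<in>U. D x \<noteq> 0 \<Longrightarrow> smooth2 U D \<Longrightarrow> smooth2 U (\<lambda>x. inverse (D x :: real))"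
  using smn_inverse by (auto simp: smooth2_smn)



lemma pd_deriv_u:
  fixes g :: "real \<times> real \<Rightarrow> real"
  assumes "g differentiable (at (s,t))"
  shows "((\<lambda>\<sigma>. g (\<sigma>,t)) has_real_derivative pd True g (s,t)) (at s)"
  using pd_has[OF assms, of True] has_real_derivative_iff_has_vector_derivative
  by (simp add: ins_def sel_def)

lemma pd_deriv_v:
  fixes g :: "real \<times> real \<Rightarrow> real"
  assumes "g differentiable (at (s,t))"
  shows "((\<lambda>\<tau>. g (s,\<tau>)) has_real_derivative pd False g (s,t)) (at t)"
  using pd_has[OF assms, of False] has_real_derivative_iff_has_vector_derivative
  by (simp add: ins_def sel_def)

lemma dist_square:
  assumes "h > 0" "a \<le> s" "s \<le> a + h" "c \<le> t" "t \<le> c + h"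
  shows "dist (s,t) (a,c) < 3 * h"
proof -
  have "(s-a)^2 + (t-c)^2 < (3*h)^2"
  proof -
    have "(s-a)^2 \<le> h^2" "(t-c)^2 \<le> h^2" using assms by (auto intro!: power_mono)
    moreover have "h^2 > 0" using assms(1) by simp
    moreover have "(3*h)^2 = 9 * h^2" by (simp add: power_mult_distrib)
    ultimately show ?thesis by linarith
  qed
  then have "sqrt ((s-a)^2 + (t-c)^2) < sqrt ((3*h)^2)" by (rule real_sqrt_less_mono)
  moreover have "sqrt ((3*h)^2) = 3*h" using assms(1) by (simp only: real_sqrt_abs abs_of_pos)
  moreover have "dist (s,t) (a,c) = sqrt ((s-a)^2 + (t-c)^2)" by (simp add: dist_Pair_Pair dist_real_def)
  ultimately show ?thesis by linarith
qed

lemma schwarz_real: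
  fixes g :: "real \<times> real \<Rightarrow> real"
  assumes U: "open U" and sm: "smooth2 U g" and x: "x \<in> U"
  shows "pd True (pd False g) x = pd False (pd True g) x"
proof (rule ccontr)
  define G1 where "G1 = pd False (pd True g)"
  define G2 where "G2 = pd True (pd False g)"
  assume ne: "\<not> ?thesis"
  then have ne': "G1 x \<noteq> G2 x" by (simp add: G1_def G2_def)
  obtain a c where xac: "x = (a,c)" by (cases x)
  define e where "e = \<bar>G1 x - G2 x\<bar> / 2"
  have e: "e > 0" using ne' by (simp add: e_def)
  have dg: "\<And>y. y \<in> U \<Longrightarrow> g differentiable (at y)" using smooth2_diff_at[OF sm U] .
  have dgb: "\<And>y b. y \<in> U \<Longrightarrow> pd b g differentiable (at y)"
    using smooth2_diff_at[OF smooth2_pd[OF sm] U] .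
  have c1: "isCont G1 x" unfolding G1_def
    by (rule differentiable_imp_continuous_within, rule smooth2_diff_at[OF smooth2_pd[OF smooth2_pd[OF sm]] U x])
  have c2: "isCont G2 x" unfolding G2_def
    by (rule differentiable_imp_continuous_within, rule smooth2_diff_at[OF smooth2_pd[OF smooth2_pd[OF sm]] U x])
  obtain d1 where d1: "d1 > 0" "\<And>y. dist y x < d1 \<Longrightarrow> dist (G1 y) (G1 x) < e"
    using c1 e unfolding continuous_at_eps_delta by blast
  obtain d2 where d2: "d2 > 0" "\<And>y. dist y x < d2 \<Longrightarrow> dist (G2 y) (G2 x) < e"
    using c2 e unfolding continuous_at_eps_delta by blast
  obtain r where r: "r > 0" "ball x r \<subseteq> U" using U x open_contains_ball by blast
  define h where "h = min r (min d1 d2) / 3"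
  have h: "h > 0" using r d1 d2 by (simp add: h_def)
  have sq: "(s,t) \<in> U \<and> dist (s,t) x < d1 \<and> dist (s,t) x < d2"
    if "a \<le> s" "s \<le> a + h" "c \<le> t" "t \<le> c + h" for s t
  proof -
    have "dist (s,t) x < 3*h" using dist_square[OF h that] xac by simp
    moreover have "3*h \<le> r" "3*h \<le> d1" "3*h \<le> d2" by (auto simp: h_def)
    ultimately show ?thesis using r(2) by (auto simp: dist_commute)
  qed
  define \<Delta> where "\<Delta> = g (a+h, c+h) - g (a+h, c) - g (a, c+h) + g (a, c)"
  obtain s where s: "a < s" "s < a + h"
    "(g (a+h,c+h) - g (a+h,c)) - (g (a,c+h) - g (a,c)) = h * (pd True g (s,c+h) - pd True g (s,c))"
  proof -
    have "\<exists>z>a. z < a + h \<and> (g (a+h,c+h) - g (a+h,c)) - (g (a,c+h) - g (a,c)) = (a + h - a) * (pd True g (z,c+h) - pd True g (z,c))"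
    proof (rule MVT2[where f = "\<lambda>\<sigma>. g (\<sigma>,c+h) - g (\<sigma>,c)"])
      show "a < a + h" using h by simp
      fix z assume "a \<le> z" "z \<le> a + h"
      then have "(z,c+h) \<in> U" "(z,c) \<in> U" using sq h by auto
      then show "((\<lambda>\<sigma>. g (\<sigma>,c+h) - g (\<sigma>,c)) has_real_derivative pd True g (z,c+h) - pd True g (z,c)) (at z)"
        by (intro DERIV_diff pd_deriv_u dg)
    qed
    then show ?thesis using that by auto
  qed
  obtain t where t: "c < t" "t < c + h" "pd True g (s,c+h) - pd True g (s,c) = h * G1 (s,t)"
  proof -
    have "\<exists>z>c. z < c + h \<and> pd True g (s,c+h) - pd True g (s,c) = (c + h - c) * G1 (s,z)"
    proof (rule MVT2[where f = "\<lambda>\<tau>. pd True g (s,\<tau>)"])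
      show "c < c + h" using h by simp
      fix z assume "c \<le> z" "z \<le> c + h"
      then have "(s,z) \<in> U" using sq s by auto
      then show "((\<lambda>\<tau>. pd True g (s,\<tau>)) has_real_derivative G1 (s,z)) (at z)"
        unfolding G1_def by (intro pd_deriv_v dgb)
    qed
    then show ?thesis using that by auto
  qed
  obtain t' where t': "c < t'" "t' < c + h"
    "(g (a+h,c+h) - g (a,c+h)) - (g (a+h,c) - g (a,c)) = h * (pd False g (a+h,t') - pd False g (a,t'))"
  proof -
    have "\<exists>z>c. z < c + h \<and> (g (a+h,c+h) - g (a,c+h)) - (g (a+h,c) - g (a,c)) = (c + h - c) * (pd False g (a+h,z) - pd False g (a,z))"
    proof (rule MVT2[where f = "\<lambda>\<tau>. g (a+h,\<tau>) - g (a,\<tau>)"])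
      show "c < c + h" using h by simp
      fix z assume "c \<le> z" "z \<le> c + h"
      then have "(a+h,z) \<in> U" "(a,z) \<in> U" using sq h by auto
      then show "((\<lambda>\<tau>. g (a+h,\<tau>) - g (a,\<tau>)) has_real_derivative pd False g (a+h,z) - pd False g (a,z)) (at z)"
        by (intro DERIV_diff pd_deriv_v dg)
    qed
    then show ?thesis using that by auto
  qed
  obtain s' where s': "a < s'" "s' < a + h" "pd False g (a+h,t') - pd False g (a,t') = h * G2 (s',t')"
  proof -
    have "\<exists>z>a. z < a + h \<and> pd False g (a+h,t') - pd False g (a,t') = (a + h - a) * G2 (z,t')"
    proof (rule MVT2[where f = "\<lambda>\<sigma>. pd False g (\<sigma>,t')"])
      show "a < a + h" using h by simp
      fix z assume "a \<le> z" "z \<le> a + h"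
      then have "(z,t') \<in> U" using sq t' by auto
      then show "((\<lambda>\<sigma>. pd False g (\<sigma>,t')) has_real_derivative G2 (z,t')) (at z)"
        unfolding G2_def by (intro pd_deriv_u dgb)
    qed
    then show ?thesis using that by auto
  qed
  have "h * h * G1 (s,t) = h * h * G2 (s',t')"
    using s(3) t(3) t'(3) s'(3) by (simp add: algebra_simps)
  then have eq: "G1 (s,t) = G2 (s',t')" using h by simp
  have "dist (G1 (s,t)) (G1 x) < e" using d1(2) sq s t by auto
  moreover have "dist (G2 (s',t')) (G2 x) < e" using d2(2) sq s' t' by auto
  ultimately have "\<bar>G1 x - G2 x\<bar> < 2 * e" using eq by (simp add: dist_real_def)
  then show False by (simp add: e_def)
qed

lemma pd_nth:
  fixes g :: "real \<times> real \<Rightarrow> real^'n"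
  assumes "g differentiable (at x)"
  shows "pd b g x $ i = pd b (\<lambda>z. g z $ i) x"
  using pd_linear[OF bounded_linear_vec_nth assms] by simp

lemma schwarz3:
  fixes g :: "real \<times> real \<Rightarrow> real^'n"
  assumes U: "open U" and sm: "smooth2 U g" and x: "x \<in> U"
  shows "pd True (pd False g) x = pd False (pd True g) x"
proof -
  have c: "pd b1 (pd b2 g) x $ i = pd b1 (pd b2 (\<lambda>z. g z $ i)) x" for b1 b2 i
  proof -
    have "pd b1 (pd b2 g) x $ i = pd b1 (\<lambda>z. pd b2 g z $ i) x"
      by (rule pd_nth, rule smooth2_diff_at[OF smooth2_pd[OF sm] U x])
    also have "\<dots> = pd b1 (pd b2 (\<lambda>z. g z $ i)) x"
      by (rule pd_cong[OF U x]) (auto intro: pd_nth smooth2_diff_at[OF sm U])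
    finally show ?thesis .
  qed
  have "smooth2 U (\<lambda>z. g z $ i)" for i by (rule smooth2_linear[OF U bounded_linear_vec_nth sm])
  then show ?thesis using c schwarz_real[OF U _ x] by (simp add: vec_eq_iff)
qed



lemma det3_cross: "det3 a b c = a \<bullet> cross3 b c"
  by (simp add: det3_def dot_cross_det)

lemma cross_dots:
  "cross3 b c \<bullet> a = det3 a b c" "cross3 b c \<bullet> b = 0" "cross3 b c \<bullet> c = 0"
  "cross3 c a \<bullet> a = 0" "cross3 c a \<bullet> b = det3 a b c" "cross3 c a \<bullet> c = 0"
  "cross3 a b \<bullet> a = 0" "cross3 a b \<bullet> b = 0" "cross3 a b \<bullet> c = det3 a b c"
  by (simp_all add: det3_def cross3_simps)

lemma det3_rep: "det3 a a c = 0" "det3 a b a = 0" "det3 a b b = 0"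
  by (simp_all add: det3_def cross3_simps)

lemma det3_cyc: "det3 b c a = det3 a b c" "det3 c a b = det3 a b c"
  by (simp_all add: det3_def cross3_simps)

lemma dual_gen:
  assumes d: "det3 a b c \<noteq> 0"
  shows "(inverse (det3 a b c) *\<^sub>R cross3 b c) \<bullet> a = 1" "(inverse (det3 a b c) *\<^sub>R cross3 b c) \<bullet> b = 0"
    "(inverse (det3 a b c) *\<^sub>R cross3 b c) \<bullet> c = 0"
    "(inverse (det3 a b c) *\<^sub>R cross3 c a) \<bullet> a = 0" "(inverse (det3 a b c) *\<^sub>R cross3 c a) \<bullet> b = 1"
    "(inverse (det3 a b c) *\<^sub>R cross3 c a) \<bullet> c = 0"
    "(inverse (det3 a b c) *\<^sub>R cross3 a b) \<bullet> a = 0" "(inverse (det3 a b c) *\<^sub>R cross3 a b) \<bullet> b = 0"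
    "(inverse (det3 a b c) *\<^sub>R cross3 a b) \<bullet> c = 1"
proof -
  have e: "cross3 b c \<bullet> a = det3 a b c" "cross3 b c \<bullet> b = 0" "cross3 b c \<bullet> c = 0"
    "cross3 c a \<bullet> a = 0" "cross3 c a \<bullet> b = det3 a b c" "cross3 c a \<bullet> c = 0"
    "cross3 a b \<bullet> a = 0" "cross3 a b \<bullet> b = 0" "cross3 a b \<bullet> c = det3 a b c"
    by (rule cross_dots)+
  show "(inverse (det3 a b c) *\<^sub>R cross3 b c) \<bullet> a = 1" "(inverse (det3 a b c) *\<^sub>R cross3 b c) \<bullet> b = 0"
    "(inverse (det3 a b c) *\<^sub>R cross3 b c) \<bullet> c = 0"
    "(inverse (det3 a b c) *\<^sub>R cross3 c a) \<bullet> a = 0" "(inverse (det3 a b c) *\<^sub>R cross3 c a) \<bullet> b = 1"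
    "(inverse (det3 a b c) *\<^sub>R cross3 c a) \<bullet> c = 0"
    "(inverse (det3 a b c) *\<^sub>R cross3 a b) \<bullet> a = 0" "(inverse (det3 a b c) *\<^sub>R cross3 a b) \<bullet> b = 0"
    "(inverse (det3 a b c) *\<^sub>R cross3 a b) \<bullet> c = 1"
    using d by (simp_all add: e)
qed

lemma decomp_poly:
  "det3 a b c *\<^sub>R w = (cross3 b c \<bullet> w) *\<^sub>R a + (cross3 c a \<bullet> w) *\<^sub>R b + (cross3 a b \<bullet> w) *\<^sub>R c"
  by (simp add: det3_def cross3_simps forall_3)

lemma decomp_dual_poly:
  "det3 a b c *\<^sub>R w = (a \<bullet> w) *\<^sub>R cross3 b c + (b \<bullet> w) *\<^sub>R cross3 c a + (c \<bullet> w) *\<^sub>R cross3 a b"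
  by (simp add: det3_def cross3_simps forall_3)

lemma mat_dots:
  "(vector [n, m, k] :: real^3^3) ** transpose (vector [a, b, c]) =
    vector [vector [n \<bullet> a, n \<bullet> b, n \<bullet> c], vector [m \<bullet> a, m \<bullet> b, m \<bullet> c], vector [k \<bullet> a, k \<bullet> b, k \<bullet> c]]"
  by (simp add: vec_eq_iff forall_3 matrix_matrix_mult_def transpose_def vector_def sum_3 inner_vec_def)

lemma det_dual:
  assumes "n \<bullet> a = 0" "n \<bullet> b = 0" "n \<bullet> c = 1" "m \<bullet> a = - r" "m \<bullet> b = 0" "m \<bullet> c = 0"
    "k \<bullet> a = 0" "k \<bullet> b = - r" "k \<bullet> c = 0"
  shows "det3 a b c * det3 n m k = r^2"
proof -
  have "det3 n m k * det3 a b c = det ((vector [n, m, k] :: real^3^3) ** transpose (vector [a, b, c]))"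
    by (simp add: det3_def det_mul det_transpose)
  also have "\<dots> = r^2" unfolding mat_dots assms
    by (simp add: det_3 vector_def power2_eq_square)
  finally show ?thesis by (simp add: mult.commute)
qed



lemma inner_span2:
  fixes n a b v :: "'a::real_inner"
  assumes "n \<bullet> a = 0" "n \<bullet> b = 0" "v \<in> span {a, b}"
  shows "n \<bullet> v = 0"
proof -
  obtain k where "v - k *\<^sub>R a \<in> span {b}" using assms(3) span_breakdown_eq by blast
  then obtain j where "v - k *\<^sub>R a = j *\<^sub>R b" by (auto simp: span_singleton)
  then have "v = k *\<^sub>R a + j *\<^sub>R b" by (simp add: algebra_simps)
  then show ?thesis using assms by (simp add: inner_add_right)
qed

lemma bb_cross: "bounded_bilinear cross3"
  using bilinear_conv_bounded_bilinear bilinear_cross by blast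

lemma pd_pair:
  assumes "F differentiable (at x)" "G differentiable (at x)"
  shows "pd b (\<lambda>x. (F x, G x)) x = (pd b F x, pd b G x)"
  by (rule pd_eqI) (intro has_vector_derivative_Pair pd_has assms)

context
  fixes U :: "(real \<times> real) set"
  assumes oU: "open U"
begin

lemma s_mult: "smooth2 U g \<Longrightarrow> smooth2 U h \<Longrightarrow> smooth2 U (\<lambda>x. g x * h x :: real)"
  by (rule smooth2_bilinear[OF oU bounded_bilinear_mult])
lemma s_scaleR: "smooth2 U g \<Longrightarrow> smooth2 U h \<Longrightarrow> smooth2 U (\<lambda>x. g x *\<^sub>R h x)"
  by (rule smooth2_bilinear[OF oU bounded_bilinear_scaleR])
lemma s_inner: "smooth2 U g \<Longrightarrow> smooth2 U h \<Longrightarrow> smooth2 U (\<lambda>x. g x \<bullet> h x)"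
  by (rule smooth2_bilinear[OF oU bounded_bilinear_inner])
lemma s_cross: "smooth2 U g \<Longrightarrow> smooth2 U h \<Longrightarrow> smooth2 U (\<lambda>x. cross3 (g x) (h x))"
  by (rule smooth2_bilinear[OF oU bb_cross])
lemma s_add: "smooth2 U g \<Longrightarrow> smooth2 U h \<Longrightarrow> smooth2 U (\<lambda>x. g x + h x)"
  by (rule smooth2_add[OF oU])
lemma s_minus: "smooth2 U g \<Longrightarrow> smooth2 U (\<lambda>x. - g x)"
  by (rule smooth2_linear[OF oU bounded_linear_minus[OF bounded_linear_ident]])
lemma s_diff: "smooth2 U g \<Longrightarrow> smooth2 U h \<Longrightarrow> smooth2 U (\<lambda>x. g x - h x)"
  using s_add[of g "\<lambda>x. - h x"] s_minus[of h] by simp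
lemma s_const: "smooth2 U (\<lambda>x. c)"
  by (rule smooth2_const)
lemma s_inverse: "\<forall>x\<in>U. D x \<noteq> 0 \<Longrightarrow> smooth2 U D \<Longrightarrow> smooth2 U (\<lambda>x. inverse (D x :: real))"
  by (rule smooth2_inverse[OF oU])
lemma s_pd: "smooth2 U g \<Longrightarrow> smooth2 U (pd b g)"
  by (rule smooth2_pd)

lemmas s_rules = s_mult s_scaleR s_inner s_cross s_add s_minus s_diff s_const s_pd

lemma d_at: "smooth2 U g \<Longrightarrow> x \<in> U \<Longrightarrow> g differentiable (at x)"
  by (rule smooth2_diff_at[OF _ oU])

lemma r_mult: "x \<in> U \<Longrightarrow> smooth2 U g \<Longrightarrow> smooth2 U h \<Longrightarrow>
   pd b (\<lambda>x. g x * h x :: real) x = pd b g x * h x + g x * pd b h x"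
  using pd_bilinear[OF bounded_bilinear_mult d_at d_at] by simp
lemma r_scaleR: "x \<in> U \<Longrightarrow> smooth2 U g \<Longrightarrow> smooth2 U h \<Longrightarrow>
   pd b (\<lambda>x. g x *\<^sub>R h x) x = pd b g x *\<^sub>R h x + g x *\<^sub>R pd b h x"
  using pd_bilinear[OF bounded_bilinear_scaleR d_at d_at] by simp
lemma r_inner: "x \<in> U \<Longrightarrow> smooth2 U g \<Longrightarrow> smooth2 U h \<Longrightarrow>
   pd b (\<lambda>x. g x \<bullet> h x) x = pd b g x \<bullet> h x + g x \<bullet> pd b h x"
  using pd_bilinear[OF bounded_bilinear_inner d_at d_at] by simp
lemma r_add: "x \<in> U \<Longrightarrow> smooth2 U g \<Longrightarrow> smooth2 U h \<Longrightarrow>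
   pd b (\<lambda>x. g x + h x) x = pd b g x + pd b h x"
  using pd_add[OF d_at d_at] by simp
lemma r_minus: "x \<in> U \<Longrightarrow> smooth2 U g \<Longrightarrow> pd b (\<lambda>x. - g x) x = - pd b g x"
proof -
  assume a: "x \<in> U" "smooth2 U g"
  have bl: "bounded_linear (\<lambda>v::'a. - v)" by (rule bounded_linear_minus[OF bounded_linear_ident])
  show ?thesis using pd_linear[OF bl d_at[OF a(2,1)], of b] by simp
qed
lemma r_diff: "x \<in> U \<Longrightarrow> smooth2 U g \<Longrightarrow> smooth2 U h \<Longrightarrow>
   pd b (\<lambda>x. g x - h x) x = pd b g x - pd b h x"
  using r_add[of x g "\<lambda>x. - h x" b] r_minus[of x h b] s_minus[of h] by simp

lemmas r_rules = r_mult r_scaleR r_inner r_add r_minus r_diff pd_const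

lemma second_vanish:
  fixes A R Q :: "real \<times> real \<Rightarrow> real"
  assumes z: "z \<in> U" and sA: "smooth2 U A" and sR: "smooth2 U R"
    and Q: "\<forall>x\<in>U. Q x = - (A x * R x)"
    and A0: "A z = 0" "pd b A z = 0" "pd c A z = 0"
  shows "pd c (pd b Q) z = - (pd c (pd b A) z * R z)"
proof -
  have "\<forall>x\<in>U. pd b Q x = - (pd b A x * R x + A x * pd b R x)"
  proof
    fix x assume x: "x \<in> U"
    have "pd b Q x = pd b (\<lambda>x. - (A x * R x)) x" by (rule pd_cong[OF oU x Q])
    also have "\<dots> = - (pd b A x * R x + A x * pd b R x)"
      using x sA sR by (simp add: r_rules s_rules del: pd_const)
    finally show "pd b Q x = - (pd b A x * R x + A x * pd b R x)" .
  qed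
  then have "pd c (pd b Q) z = pd c (\<lambda>x. - (pd b A x * R x + A x * pd b R x)) z"
    by (rule pd_cong[OF oU z])
  also have "\<dots> = - (pd c (pd b A) z * R z)"
    using z sA sR A0 by (simp add: r_rules s_rules)
  finally show ?thesis .
qed

lemma first_vanish:
  fixes A B P K1 K2 b1 G :: "real \<times> real \<Rightarrow> real"
  assumes z: "z \<in> U" and s: "smooth2 U A" "smooth2 U B" "smooth2 U P" "smooth2 U K1" "smooth2 U K2" "smooth2 U b1"
    and G: "\<forall>x\<in>U. G x = C - A x * K1 x - B x * K2 x + P x * b1 x"
    and A0: "A z = 0" "B z = 0" "pd c A z = 0" "pd c B z = 0" "pd c P z = 0"
  shows "pd c G z = P z * pd c b1 z"
proof -
  have "pd c G z = pd c (\<lambda>x. C - A x * K1 x - B x * K2 x + P x * b1 x) z"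
    by (rule pd_cong[OF oU z G])
  also have "\<dots> = P z * pd c b1 z"
    using z s A0 by (simp add: r_rules s_rules)
  finally show ?thesis .
qed

end



lemma pd_u_eq: "pd_u = pd True" by (auto simp: pd_def fun_eq_iff)
lemma pd_v_eq: "pd_v = pd False" by (auto simp: pd_def fun_eq_iff)

theorem proposition4p2:
  fixes U :: "(real \<times> real) set"
    and f \<xi> \<nu> :: "real \<times> real \<Rightarrow> real^3"
    and \<rho> b11 b12 b21 b22 :: "real \<times> real \<Rightarrow> real"
    and lam0 :: real
  assumes U: "open U" "(0,0) \<in> U"
    and smooth: "smooth2 U f" "smooth2 U \<xi>"
    and transversal: "\<forall>x\<in>U. det3 (pd_u f x) (pd_v f x) (\<xi> x) \<noteq> 0"
    and shape: "\<forall>x\<in>U. pd_u \<xi> x = - b11 x *\<^sub>R pd_u f x - b21 x *\<^sub>R pd_v f x"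
               "\<forall>x\<in>U. pd_v \<xi> x = - b12 x *\<^sub>R pd_u f x - b22 x *\<^sub>R pd_v f x"
    and isothermal: "\<forall>x\<in>U. \<rho> x > 0"
      "\<forall>x\<in>U. pd_u (pd_u f) x - \<rho> x *\<^sub>R \<xi> x \<in> span {pd_u f x, pd_v f x}"
      "\<forall>x\<in>U. pd_v (pd_v f) x - \<rho> x *\<^sub>R \<xi> x \<in> span {pd_u f x, pd_v f x}"
      "\<forall>x\<in>U. pd_v (pd_u f) x \<in> span {pd_u f x, pd_v f x}"
    and umbilic: "b11 (0,0) = lam0" "b22 (0,0) = lam0" "b12 (0,0) = 0" "b21 (0,0) = 0"
    and lam: "lam0 \<noteq> 0"
    and conormal: "\<forall>x\<in>U. \<nu> x \<bullet> pd_u f x = 0 \<and> \<nu> x \<bullet> pd_v f x = 0 \<and> \<nu> x \<bullet> \<xi> x = 1"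
  shows
    "let q0 = f (0,0) + (1 / lam0) *\<^sub>R \<xi> (0,0);
         p = (\<lambda>x. \<nu> x \<bullet> (f x - q0));
         P = (\<lambda>x. (pd_u (pd_u p) x - pd_v (pd_v p) x, 2 * pd_v (pd_u p) x));
         B = (\<lambda>x. (b11 x - b22 x, 2 * b12 x));
         \<delta>0 = det3 (pd_u f (0,0)) (pd_v f (0,0)) (\<xi> (0,0))
              * det3 (\<nu> (0,0)) (pd_u \<nu> (0,0)) (pd_v \<nu> (0,0)) / \<rho> (0,0)
     in jet1 P (0,0) = (\<delta>0 / lam0) *\<^sub>R jet1 B (0,0)"
proof -
  note oU = U(1) and z = U(2)
  note sr = s_rules[OF oU] and rr = r_rules[OF oU]
  note tr = transversal[unfolded pd_u_eq pd_v_eq]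
  note sh = shape[unfolded pd_u_eq pd_v_eq]
  note iso = isothermal[unfolded pd_u_eq pd_v_eq]
  note con = conormal[unfolded pd_u_eq pd_v_eq]
  have sf: "smooth2 U f" and sxi: "smooth2 U \<xi>" using smooth by auto
  have schw: "\<forall>x\<in>U. pd True (pd False f) x = pd False (pd True f) x"
    using schwarz3[OF oU sf] by blast
  define D where "D x = det3 (pd True f x) (pd False f x) (\<xi> x)" for x
  have Dnz: "\<forall>x\<in>U. D x \<noteq> 0" using tr by (simp add: D_def)
  have D_alt: "D = (\<lambda>x. pd True f x \<bullet> cross3 (pd False f x) (\<xi> x))"
    by (simp add: D_def det3_cross fun_eq_iff)
  have sD: "smooth2 U D" unfolding D_alt using sf sxi by (simp add: sr)
  have siD: "smooth2 U (\<lambda>x. inverse (D x))" by (rule s_inverse[OF oU Dnz sD])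
  define e1 where "e1 x = inverse (D x) *\<^sub>R cross3 (pd False f x) (\<xi> x)" for x
  define e2 where "e2 x = inverse (D x) *\<^sub>R cross3 (\<xi> x) (pd True f x)" for x
  define e3 where "e3 x = inverse (D x) *\<^sub>R cross3 (pd True f x) (pd False f x)" for x
  have se1: "smooth2 U e1" unfolding e1_def[abs_def] using sf sxi siD by (simp add: sr)
  have se2: "smooth2 U e2" unfolding e2_def[abs_def] using sf sxi siD by (simp add: sr)
  have se3: "smooth2 U e3" unfolding e3_def[abs_def] using sf sxi siD by (simp add: sr)
  have dual: "e1 x \<bullet> pd True f x = 1" "e1 x \<bullet> pd False f x = 0" "e1 x \<bullet> \<xi> x = 0"
    "e2 x \<bullet> pd True f x = 0" "e2 x \<bullet> pd False f x = 1" "e2 x \<bullet> \<xi> x = 0"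
    "e3 x \<bullet> pd True f x = 0" "e3 x \<bullet> pd False f x = 0" "e3 x \<bullet> \<xi> x = 1"
    if "x \<in> U" for x
    using dual_gen[of "pd True f x" "pd False f x" "\<xi> x"] Dnz that by (simp_all add: e1_def e2_def e3_def D_def)
  have nu_e3: "\<forall>x\<in>U. \<nu> x = e3 x"
  proof
    fix x assume x: "x \<in> U"
    have "D x *\<^sub>R \<nu> x = cross3 (pd True f x) (pd False f x)"
      using decomp_dual_poly[of "pd True f x" "pd False f x" "\<xi> x" "\<nu> x"] con x
      by (simp add: D_def inner_commute)
    moreover have "\<nu> x = inverse (D x) *\<^sub>R (D x *\<^sub>R \<nu> x)" using Dnz x by simp
    ultimately show "\<nu> x = e3 x" by (simp add: e3_def)
  qed
  have snu: "smooth2 U \<nu>" by (rule smooth2_cong[OF oU _ se3]) (use nu_e3 in auto)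
  define q0 where "q0 = f (0,0) + (1 / lam0) *\<^sub>R \<xi> (0,0)"
  define p where "p = (\<lambda>x. \<nu> x \<bullet> (f x - q0))"
  define al where "al x = e1 x \<bullet> (f x - q0)" for x
  define be where "be x = e2 x \<bullet> (f x - q0)" for x
  have sw: "smooth2 U (\<lambda>x. f x - q0)" using sf by (simp add: sr)
  have sp: "smooth2 U p" unfolding p_def using sw snu by (simp add: sr)
  have sal: "smooth2 U al" unfolding al_def[abs_def] using sw se1 by (simp add: sr)
  have sbe: "smooth2 U be" unfolding be_def[abs_def] using sw se2 by (simp add: sr)
  have decomp: "\<forall>x\<in>U. f x - q0 = al x *\<^sub>R pd True f x + be x *\<^sub>R pd False f x + p x *\<^sub>R \<xi> x"
  proof
    fix x assume x: "x \<in> U"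
    have "D x *\<^sub>R (f x - q0) = (cross3 (pd False f x) (\<xi> x) \<bullet> (f x - q0)) *\<^sub>R pd True f x
       + (cross3 (\<xi> x) (pd True f x) \<bullet> (f x - q0)) *\<^sub>R pd False f x
       + (cross3 (pd True f x) (pd False f x) \<bullet> (f x - q0)) *\<^sub>R \<xi> x"
      using decomp_poly by (simp add: D_def)
    then have "f x - q0 = inverse (D x) *\<^sub>R ((cross3 (pd False f x) (\<xi> x) \<bullet> (f x - q0)) *\<^sub>R pd True f x
       + (cross3 (\<xi> x) (pd True f x) \<bullet> (f x - q0)) *\<^sub>R pd False f x
       + (cross3 (pd True f x) (pd False f x) \<bullet> (f x - q0)) *\<^sub>R \<xi> x)"
      using Dnz x by (metis (no_types, lifting) scaleR_scaleR left_inverse scaleR_one)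
    then show "f x - q0 = al x *\<^sub>R pd True f x + be x *\<^sub>R pd False f x + p x *\<^sub>R \<xi> x"
      using nu_e3 x by (simp add: al_def be_def p_def e1_def e2_def e3_def scaleR_add_right)
  qed
  have b11e: "\<forall>x\<in>U. b11 x = - (e1 x \<bullet> pd True \<xi> x)"
    and b21e: "\<forall>x\<in>U. b21 x = - (e2 x \<bullet> pd True \<xi> x)"
    and b12e: "\<forall>x\<in>U. b12 x = - (e1 x \<bullet> pd False \<xi> x)"
    and b22e: "\<forall>x\<in>U. b22 x = - (e2 x \<bullet> pd False \<xi> x)"
    using sh dual by (simp_all add: inner_diff_right)
  have sb11: "smooth2 U b11"
    by (rule smooth2_cong[OF oU _ sr(6)[OF sr(3)[OF se1 sr(9)[OF sxi]]]]) (use b11e in auto)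
  have sb21: "smooth2 U b21"
    by (rule smooth2_cong[OF oU _ sr(6)[OF sr(3)[OF se2 sr(9)[OF sxi]]]]) (use b21e in auto)
  have sb12: "smooth2 U b12"
    by (rule smooth2_cong[OF oU _ sr(6)[OF sr(3)[OF se1 sr(9)[OF sxi]]]]) (use b12e in auto)
  have sb22: "smooth2 U b22"
    by (rule smooth2_cong[OF oU _ sr(6)[OF sr(3)[OF se2 sr(9)[OF sxi]]]]) (use b22e in auto)
  have nfuu: "\<forall>x\<in>U. \<nu> x \<bullet> pd True (pd True f) x = \<rho> x"
  proof
    fix x assume x: "x \<in> U"
    have "\<nu> x \<bullet> (pd True (pd True f) x - \<rho> x *\<^sub>R \<xi> x) = 0"
      using inner_span2 con iso x by blast
    then show "\<nu> x \<bullet> pd True (pd True f) x = \<rho> x" using con x by (simp add: inner_diff_right)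
  qed
  have nfvv: "\<forall>x\<in>U. \<nu> x \<bullet> pd False (pd False f) x = \<rho> x"
  proof
    fix x assume x: "x \<in> U"
    have "\<nu> x \<bullet> (pd False (pd False f) x - \<rho> x *\<^sub>R \<xi> x) = 0"
      using inner_span2 con iso x by blast
    then show "\<nu> x \<bullet> pd False (pd False f) x = \<rho> x" using con x by (simp add: inner_diff_right)
  qed
  have nfuv: "\<forall>x\<in>U. \<nu> x \<bullet> pd False (pd True f) x = 0"
    using inner_span2 con iso by blast
  have nfvu: "\<forall>x\<in>U. \<nu> x \<bullet> pd True (pd False f) x = 0"
    using nfuv schw by simp
  have nxu: "\<forall>x\<in>U. \<nu> x \<bullet> pd True \<xi> x = 0" and nxv: "\<forall>x\<in>U. \<nu> x \<bullet> pd False \<xi> x = 0"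
    using sh con by (simp_all add: inner_diff_right)
  have srho: "smooth2 U \<rho>"
    by (rule smooth2_cong[OF oU _ sr(3)[OF snu sr(9)[OF sr(9)[OF sf]]]]) (use nfuu in auto)
  have ddec: "pd b f x = pd b al x *\<^sub>R pd True f x + al x *\<^sub>R pd b (pd True f) x
      + (pd b be x *\<^sub>R pd False f x + be x *\<^sub>R pd b (pd False f) x)
      + (pd b p x *\<^sub>R \<xi> x + p x *\<^sub>R pd b \<xi> x)" if x: "x \<in> U" for b x
  proof -
    have "pd b (\<lambda>x. f x - q0) x = pd b (\<lambda>x. al x *\<^sub>R pd True f x + be x *\<^sub>R pd False f x + p x *\<^sub>R \<xi> x) x"
      by (rule pd_cong[OF oU x decomp])
    then show ?thesis using x sf sxi sal sbe sp by (simp add: rr sr)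
  qed
  have S1: "\<forall>x\<in>U. pd True al x = 1 - al x * (e1 x \<bullet> pd True (pd True f) x) - be x * (e1 x \<bullet> pd True (pd False f) x) + p x * b11 x"
  proof
    fix x assume x: "x \<in> U"
    have "e1 x \<bullet> pd True f x = e1 x \<bullet> (pd True al x *\<^sub>R pd True f x + al x *\<^sub>R pd True (pd True f) x
      + (pd True be x *\<^sub>R pd False f x + be x *\<^sub>R pd True (pd False f) x)
      + (pd True p x *\<^sub>R \<xi> x + p x *\<^sub>R pd True \<xi> x))" using ddec[OF x] by metis
    then show "pd True al x = 1 - al x * (e1 x \<bullet> pd True (pd True f) x) - be x * (e1 x \<bullet> pd True (pd False f) x) + p x * b11 x"
      using dual[OF x] b11e x by (simp add: inner_add_right algebra_simps)
  qed
  have S2: "\<forall>x\<in>U. pd True be x = 0 - al x * (e2 x \<bullet> pd True (pd True f) x) - be x * (e2 x \<bullet> pd True (pd False f) x) + p x * b21 x"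
  proof
    fix x assume x: "x \<in> U"
    have "e2 x \<bullet> pd True f x = e2 x \<bullet> (pd True al x *\<^sub>R pd True f x + al x *\<^sub>R pd True (pd True f) x
      + (pd True be x *\<^sub>R pd False f x + be x *\<^sub>R pd True (pd False f) x)
      + (pd True p x *\<^sub>R \<xi> x + p x *\<^sub>R pd True \<xi> x))" using ddec[OF x] by metis
    then show "pd True be x = 0 - al x * (e2 x \<bullet> pd True (pd True f) x) - be x * (e2 x \<bullet> pd True (pd False f) x) + p x * b21 x"
      using dual[OF x] b21e x by (simp add: inner_add_right algebra_simps)
  qed
  have S3: "\<forall>x\<in>U. pd True p x = - (al x * \<rho> x)"
  proof
    fix x assume x: "x \<in> U"
    have "\<nu> x \<bullet> pd True f x = \<nu> x \<bullet> (pd True al x *\<^sub>R pd True f x + al x *\<^sub>R pd True (pd True f) x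
      + (pd True be x *\<^sub>R pd False f x + be x *\<^sub>R pd True (pd False f) x)
      + (pd True p x *\<^sub>R \<xi> x + p x *\<^sub>R pd True \<xi> x))" using ddec[OF x] by metis
    then show "pd True p x = - (al x * \<rho> x)"
      using con nfuu nfvu nxu x by (simp add: inner_add_right algebra_simps)
  qed
  have S4: "\<forall>x\<in>U. pd False al x = 0 - al x * (e1 x \<bullet> pd False (pd True f) x) - be x * (e1 x \<bullet> pd False (pd False f) x) + p x * b12 x"
  proof
    fix x assume x: "x \<in> U"
    have "e1 x \<bullet> pd False f x = e1 x \<bullet> (pd False al x *\<^sub>R pd True f x + al x *\<^sub>R pd False (pd True f) x
      + (pd False be x *\<^sub>R pd False f x + be x *\<^sub>R pd False (pd False f) x)
      + (pd False p x *\<^sub>R \<xi> x + p x *\<^sub>R pd False \<xi> x))" using ddec[OF x] by metis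
    then show "pd False al x = 0 - al x * (e1 x \<bullet> pd False (pd True f) x) - be x * (e1 x \<bullet> pd False (pd False f) x) + p x * b12 x"
      using dual[OF x] b12e x by (simp add: inner_add_right algebra_simps)
  qed
  have S5: "\<forall>x\<in>U. pd False be x = 1 - al x * (e2 x \<bullet> pd False (pd True f) x) - be x * (e2 x \<bullet> pd False (pd False f) x) + p x * b22 x"
  proof
    fix x assume x: "x \<in> U"
    have "e2 x \<bullet> pd False f x = e2 x \<bullet> (pd False al x *\<^sub>R pd True f x + al x *\<^sub>R pd False (pd True f) x
      + (pd False be x *\<^sub>R pd False f x + be x *\<^sub>R pd False (pd False f) x)
      + (pd False p x *\<^sub>R \<xi> x + p x *\<^sub>R pd False \<xi> x))" using ddec[OF x] by metis
    then show "pd False be x = 1 - al x * (e2 x \<bullet> pd False (pd True f) x) - be x * (e2 x \<bullet> pd False (pd False f) x) + p x * b22 x"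
      using dual[OF x] b22e x by (simp add: inner_add_right algebra_simps)
  qed
  have S6: "\<forall>x\<in>U. pd False p x = - (be x * \<rho> x)"
  proof
    fix x assume x: "x \<in> U"
    have "\<nu> x \<bullet> pd False f x = \<nu> x \<bullet> (pd False al x *\<^sub>R pd True f x + al x *\<^sub>R pd False (pd True f) x
      + (pd False be x *\<^sub>R pd False f x + be x *\<^sub>R pd False (pd False f) x)
      + (pd False p x *\<^sub>R \<xi> x + p x *\<^sub>R pd False \<xi> x))" using ddec[OF x] by metis
    then show "pd False p x = - (be x * \<rho> x)"
      using con nfvv nfuv nxv x by (simp add: inner_add_right algebra_simps)
  qed
  define z0 where "z0 = (0::real, 0::real)"
  have z0: "z0 \<in> U" using z by (simp add: z0_def)
  have w0: "f z0 - q0 = - ((1 / lam0) *\<^sub>R \<xi> z0)" by (simp add: q0_def z0_def)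
  have al0: "al z0 = 0" using dual[OF z0] by (simp add: al_def w0)
  have be0: "be z0 = 0" using dual[OF z0] by (simp add: be_def w0)
  have p0: "p z0 = - (1 / lam0)" using con z0 by (simp add: p_def w0)
  have um: "b11 z0 = lam0" "b22 z0 = lam0" "b12 z0 = 0" "b21 z0 = 0" using umbilic by (simp_all add: z0_def)
  have alu0: "pd True al z0 = 0" using S1 z0 al0 be0 p0 um lam by simp
  have bev0: "pd False be z0 = 0" using S5 z0 al0 be0 p0 um lam by simp
  have alv0: "pd False al z0 = 0" using S4 z0 al0 be0 p0 um lam by simp
  have beu0: "pd True be z0 = 0" using S2 z0 al0 be0 p0 um lam by simp
  have al1: "pd c al z0 = 0" for c using alu0 alv0 by (cases c) auto
  have be1: "pd c be z0 = 0" for c using beu0 bev0 by (cases c) auto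
  have p1: "pd c p z0 = 0" for c using S3 S6 z0 al0 be0 by (cases c) auto
  have p2u: "pd c (pd True p) z0 = 0" for c
  proof -
    have "pd c (pd True p) z0 = pd c (\<lambda>x. - (al x * \<rho> x)) z0" by (rule pd_cong[OF oU z0 S3])
    also have "\<dots> = 0" using z0 sal srho al0 al1 by (simp add: rr sr)
    finally show ?thesis .
  qed
  have p2v: "pd c (pd False p) z0 = 0" for c
  proof -
    have "pd c (pd False p) z0 = pd c (\<lambda>x. - (be x * \<rho> x)) z0" by (rule pd_cong[OF oU z0 S6])
    also have "\<dots> = 0" using z0 sbe srho be0 be1 by (simp add: rr sr)
    finally show ?thesis .
  qed
  have T1: "pd c (pd True (pd True p)) z0 = \<rho> z0 / lam0 * pd c b11 z0" for c
  proof -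
    have "pd c (pd True (pd True p)) z0 = - (pd c (pd True al) z0 * \<rho> z0)"
      by (rule second_vanish[OF oU z0 sal srho S3 al0 al1 al1])
    moreover have "pd c (pd True al) z0 = p z0 * pd c b11 z0"
      by (rule first_vanish[OF oU z0 sal sbe sp _ _ sb11 S1 al0 be0 al1 be1 p1]) (use sf se1 in \<open>simp_all add: sr\<close>)
    ultimately show ?thesis using p0 by simp
  qed
  have T2: "pd c (pd False (pd False p)) z0 = \<rho> z0 / lam0 * pd c b22 z0" for c
  proof -
    have "pd c (pd False (pd False p)) z0 = - (pd c (pd False be) z0 * \<rho> z0)"
      by (rule second_vanish[OF oU z0 sbe srho S6 be0 be1 be1])
    moreover have "pd c (pd False be) z0 = p z0 * pd c b22 z0"
      by (rule first_vanish[OF oU z0 sal sbe sp _ _ sb22 S5 al0 be0 al1 be1 p1]) (use sf se2 in \<open>simp_all add: sr\<close>)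
    ultimately show ?thesis using p0 by simp
  qed
  have T3: "pd c (pd False (pd True p)) z0 = \<rho> z0 / lam0 * pd c b12 z0" for c
  proof -
    have "pd c (pd False (pd True p)) z0 = - (pd c (pd False al) z0 * \<rho> z0)"
      by (rule second_vanish[OF oU z0 sal srho S3 al0 al1 al1])
    moreover have "pd c (pd False al) z0 = p z0 * pd c b12 z0"
      by (rule first_vanish[OF oU z0 sal sbe sp _ _ sb12 S4 al0 be0 al1 be1 p1]) (use sf se1 in \<open>simp_all add: sr\<close>)
    ultimately show ?thesis using p0 by simp
  qed
  have dnf: "pd b \<nu> z0 \<bullet> pd c f z0 = - (\<nu> z0 \<bullet> pd b (pd c f) z0)" for b c
  proof -
    have "\<forall>x\<in>U. \<nu> x \<bullet> pd c f x = 0" using con by (cases c) auto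
    then have "pd b (\<lambda>x. \<nu> x \<bullet> pd c f x) z0 = pd b (\<lambda>x. 0) z0" by (intro pd_cong[OF oU z0]) auto
    then show ?thesis using z0 snu sf by (simp add: rr sr add_eq_0_iff)
  qed
  have dnx: "pd b \<nu> z0 \<bullet> \<xi> z0 = - (\<nu> z0 \<bullet> pd b \<xi> z0)" for b
  proof -
    have "\<forall>x\<in>U. \<nu> x \<bullet> \<xi> x = 1" using con by auto
    then have "pd b (\<lambda>x. \<nu> x \<bullet> \<xi> x) z0 = pd b (\<lambda>x. 1) z0" by (intro pd_cong[OF oU z0]) auto
    then show ?thesis using z0 snu sxi by (simp add: rr sr add_eq_0_iff)
  qed
  have rho0: "\<rho> z0 > 0" using iso z0 by auto
  have ddet: "det3 (pd True f z0) (pd False f z0) (\<xi> z0) * det3 (\<nu> z0) (pd True \<nu> z0) (pd False \<nu> z0) = (\<rho> z0)^2"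
    by (rule det_dual) (use con z0 nfuu nfvv nfuv nfvu nxu nxv dnf dnx in auto)
  have delta: "det3 (pd True f z0) (pd False f z0) (\<xi> z0) * det3 (\<nu> z0) (pd True \<nu> z0) (pd False \<nu> z0) / \<rho> z0 = \<rho> z0"
    using ddet rho0 by (simp add: power2_eq_square)
  have sP1: "smooth2 U (\<lambda>x. pd True (pd True p) x - pd False (pd False p) x)" using sp by (simp add: sr)
  have sP2: "smooth2 U (\<lambda>x. 2 * pd False (pd True p) x)" using sp by (simp add: sr)
  have PP: "pd c (\<lambda>x. (pd True (pd True p) x - pd False (pd False p) x, 2 * pd False (pd True p) x)) z0
     = (\<rho> z0 / lam0 * pd c b11 z0 - \<rho> z0 / lam0 * pd c b22 z0, 2 * (\<rho> z0 / lam0 * pd c b12 z0))" for c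
    using pd_pair[OF d_at[OF oU sP1 z0] d_at[OF oU sP2 z0]] z0 sp T1 T2 T3 by (simp add: rr sr)
  have sB1: "smooth2 U (\<lambda>x. b11 x - b22 x)" using sb11 sb22 by (simp add: sr)
  have sB2: "smooth2 U (\<lambda>x. 2 * b12 x)" using sb12 by (simp add: sr)
  have BB: "pd c (\<lambda>x. (b11 x - b22 x, 2 * b12 x)) z0 = (pd c b11 z0 - pd c b22 z0, 2 * pd c b12 z0)" for c
    using pd_pair[OF d_at[OF oU sB1 z0] d_at[OF oU sB2 z0]] z0 sb11 sb22 sb12 by (simp add: rr sr)
  have P0: "pd True (pd True p) z0 - pd False (pd False p) z0 = 0" "2 * pd False (pd True p) z0 = 0"
    using p2u p2v by auto
  have pe: "(\<lambda>x. \<nu> x \<bullet> (f x - (f (0,0) + (1 / lam0) *\<^sub>R \<xi> (0,0)))) = p"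
    by (simp add: p_def q0_def)
  show ?thesis
    unfolding Let_def
    unfolding pd_u_eq pd_v_eq jet1_def
    unfolding pe
    unfolding z0_def[symmetric]
    unfolding PP BB delta P0 using um by (simp add: algebra_simps)
qed
end
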